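(* Let $P,K:\mathbb{N}_0\to\mathbb{N}_0$ be a scaling with $\lim_{n\to\infty}K_n^2/P_n=0$. Then $\beta(\theta_n)\sim\tau(\theta_n)$ as $n\to\infty$, where $\tau(\theta_n)=\frac{K_n^3}{P_n^2}+\left(\frac{K_n^2}{P_n}\right)^3$.
   Context: For positive integers $K\le P$, $\theta=(K,P)$: $q(\theta)=\binom{P-K}{K}/\binom{P}{K}$ if $2K\le P$ and $q(\theta)=0$ if $P<2K$; $r(\theta)=\binom{P-2K}{K}/\binom{P}{K}$ if $3K\le P$ and $r(\theta)=0$ if $P<3K$; $\beta(\theta)=(1-q(\theta))^3+q(\theta)^3-q(\theta)r(\theta)$ (this is the probability that three given nodes form a triangle in the random key graph in which each node receives a uniformly random $K$-subset of $\{1,\dots,P\}$ independently, and two nodes are adjacent iff their subsets intersect); $\tau(\theta)=K^3/P^2+(K^2/P)^3$. A scaling is a pair of functions $P,K:\mathbb{N}_0\to\mathbb{N}_0$ with $1\le K_n\le P_n$ for all $n$, and $\theta_n=(K_n,P_n)$. Asymptotic equivalence $a_n\sim b_n$ means $a_n/b_n\to1$. *)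

theory Defs
  imports "HOL-Analysis.Analysis"
begin

definition q_rkg :: "nat \<Rightarrow> nat \<Rightarrow> real" where
  "q_rkg K P = (if 2 * K \<le> P then real ((P - K) choose K) / real (P choose K) else 0)"

definition r_rkg :: "nat \<Rightarrow> nat \<Rightarrow> real" where
  "r_rkg K P = (if 3 * K \<le> P then real ((P - 2 * K) choose K) / real (P choose K) else 0)"

definition beta_rkg :: "nat \<Rightarrow> nat \<Rightarrow> real" where
  "beta_rkg K P = (1 - q_rkg K P) ^ 3 + q_rkg K P ^ 3 - q_rkg K P * r_rkg K P"

definition tau_rkg :: "nat \<Rightarrow> nat \<Rightarrow> real" where
  "tau_rkg K P = real K ^ 3 / real P ^ 2 + (real K ^ 2 / real P) ^ 3"

end

theory Submission
  imports Defs
begin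

lemma choose_ratio:
  assumes "k \<le> m" "k \<le> n"
  shows "real (m choose k) / real (n choose k) = (\<Prod>i<k. real (m - i) / real (n - i))"
proof -
  have "real (m choose k) / real (n choose k)
      = (\<Prod>i = 0..<k. real (m - i) / real (k - i)) / (\<Prod>i = 0..<k. real (n - i) / real (k - i))"
    using assms by (simp add: binomial_altdef_of_nat)
  also have "\<dots> = (\<Prod>i = 0..<k. (real (m - i) / real (k - i)) / (real (n - i) / real (k - i)))"
    by (simp add: prod_dividef)
  also have "\<dots> = (\<Prod>i = 0..<k. real (m - i) / real (n - i))"
    by (rule prod.cong) auto
  finally show ?thesis by (simp add: atLeast0LessThan)
qed

lemma pow_lower: "0 \<le> x \<Longrightarrow> x \<le> 1 \<Longrightarrow> (1 - x) ^ n \<le> 1 - real n * x + (real n * x)^2 / 2"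
proof (induction n)
  case 0 then show ?case by simp
next
  case (Suc n)
  have "(1 - x) ^ Suc n = (1 - x) * (1 - x) ^ n" by simp
  also have "\<dots> \<le> (1 - x) * (1 - real n * x + (real n * x)^2 / 2)"
    using Suc by (intro mult_left_mono) auto
  also have "\<dots> \<le> 1 - real (Suc n) * x + (real (Suc n) * x)^2 / 2"
  proof -
    have "0 \<le> x * (real n * x)^2 / 2 + x^2/2" using Suc.prems by simp
    then show ?thesis by (simp add: algebra_simps power2_eq_square)
  qed
  finally show ?case .
qed

lemma pow_upper: "0 \<le> x \<Longrightarrow> x \<le> 1 \<Longrightarrow> 1 - real n * x \<le> (1 - x) ^ n"
  using Bernoulli_inequality[of "-x" n] by simp

lemma prod_bounds:
  fixes y :: "nat \<Rightarrow> real"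
  assumes "\<And>i. i < K \<Longrightarrow> c \<le> y i \<and> y i \<le> d" "0 \<le> c" "d \<le> 1"
  shows "real K * c - (real K * c)^2/2 \<le> 1 - (\<Prod>i<K. 1 - y i)"
    and "1 - (\<Prod>i<K. 1 - y i) \<le> real K * d"
proof -
  have "(\<Prod>i<K. 1 - y i) \<le> (\<Prod>i<K. 1 - c)"
    using assms by (intro prod_mono) force
  also have "\<dots> = (1 - c) ^ K" by simp
  also have "\<dots> \<le> 1 - real K * c + (real K * c)^2 / 2"
    using assms(2,3) assms(1)[of 0] pow_lower[of c K]
    by (cases "K = 0") auto
  finally show "real K * c - (real K * c)^2/2 \<le> 1 - (\<Prod>i<K. 1 - y i)" by simp
  have "1 - real K * d \<le> (1 - d) ^ K"
  proof (cases "K = 0")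
    case False
    then have "0 \<le> d" using assms(1)[of 0] assms(2) by auto
    then show ?thesis using assms(3) pow_upper[of d K] by auto
  qed simp
  also have "\<dots> = (\<Prod>i<K. 1 - d)" by simp
  also have "\<dots> \<le> (\<Prod>i<K. 1 - y i)"
    using assms by (intro prod_mono) force
  finally show "1 - (\<Prod>i<K. 1 - y i) \<le> real K * d" by simp
qed

lemma ratio_bound:
  fixes u v a b :: real
  assumes "u > 0" "v > 0"
  shows "\<bar>(u^3 * a^3 + v * b) / (v + u^3) - 1\<bar> \<le> \<bar>a^3 - 1\<bar> + \<bar>b - 1\<bar>"
proof -
  have pos: "v + u^3 > 0" using assms by (intro add_pos_pos) auto
  have "(u^3 * a^3 + v * b) / (v + u^3) - 1 = (u^3 * (a^3 - 1) + v * (b - 1)) / (v + u^3)"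
    using pos by (simp add: field_simps)
  also have "\<bar>\<dots>\<bar> \<le> (u^3 * \<bar>a^3 - 1\<bar> + v * \<bar>b - 1\<bar>) / (v + u^3)"
    using pos assms by (simp add: abs_mult divide_right_mono abs_triangle_ineq[THEN order_trans])
  also have "\<dots> \<le> ((v + u^3) * \<bar>a^3 - 1\<bar> + (v + u^3) * \<bar>b - 1\<bar>) / (v + u^3)"
    using pos assms by (intro divide_right_mono add_mono mult_right_mono) auto
  also have "\<dots> = \<bar>a^3 - 1\<bar> + \<bar>b - 1\<bar>" using pos by (simp add: field_simps)
  finally show ?thesis .
qed

lemma q_prod:
  assumes "1 \<le> K" "2 * K \<le> P"
  shows "q_rkg K P = (\<Prod>i<K. 1 - real K / (real P - real i))"
proof -
  have "q_rkg K P = (\<Prod>i<K. real (P - K - i) / real (P - i))"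
    using assms by (simp add: q_rkg_def choose_ratio)
  also have "\<dots> = (\<Prod>i<K. 1 - real K / (real P - real i))"
  proof (rule prod.cong)
    fix i assume "i \<in> {..<K}"
    then have i: "i < K" by simp
    have "real (P - K - i) = real P - real K - real i" using i assms by (simp add: of_nat_diff)
    moreover have "real (P - i) = real P - real i" using i assms by (simp add: of_nat_diff)
    moreover have "real P - real i > 0" using i assms by simp
    ultimately show "real (P - K - i) / real (P - i) = 1 - real K / (real P - real i)"
      by (simp add: field_simps)
  qed simp
  finally show ?thesis .
qed

lemma r_term:
  fixes a b k :: real
  assumes "a > 0" "b = a + k" "b > 0"
  shows "(a - k) / b = (a / b) ^ 2 * (1 - k ^ 2 / a ^ 2)"
proof -
  have e: "1 - k ^ 2 / a ^ 2 = (a^2 - k^2) / a^2" using assms(1) by (simp add: field_simps)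
  have "(a / b) ^ 2 * (1 - k ^ 2 / a ^ 2) = (a^2 - k^2) / b^2"
    unfolding e using assms(1) by (simp add: power_divide)
  also have "a^2 - k^2 = (a - k) * b" using assms(2) by (simp add: algebra_simps power2_eq_square)
  finally show ?thesis using assms by (simp add: power2_eq_square)
qed

lemma r_prod:
  assumes "1 \<le> K" "3 * K \<le> P"
  shows "r_rkg K P = q_rkg K P ^ 2 * (\<Prod>i<K. 1 - real K ^ 2 / (real P - real K - real i) ^ 2)"
proof -
  have q: "q_rkg K P = (\<Prod>i<K. real (P - K - i) / real (P - i))"
    using assms by (simp add: q_rkg_def choose_ratio)
  have "r_rkg K P = (\<Prod>i<K. real (P - 2 * K - i) / real (P - i))"
    using assms by (simp add: r_rkg_def choose_ratio)
  also have "\<dots> = (\<Prod>i<K. (real (P - K - i) / real (P - i)) ^ 2 *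
                        (1 - real K ^ 2 / (real P - real K - real i) ^ 2))"
  proof (rule prod.cong)
    fix i assume "i \<in> {..<K}"
    then have i: "i < K" by simp
    have e1: "real (P - K - i) = real P - real K - real i" using i assms by (simp add: of_nat_diff)
    have e2: "real (P - i) = real P - real i" using i assms by (simp add: of_nat_diff)
    have e3: "real (P - 2 * K - i) = real P - 2 * real K - real i" using i assms by (simp add: of_nat_diff)
    have p1: "real P - real i > 0" using i assms by simp
    have p2: "real P - real K - real i > 0" using i assms by simp
    show "real (P - 2 * K - i) / real (P - i) = (real (P - K - i) / real (P - i)) ^ 2 *
                        (1 - real K ^ 2 / (real P - real K - real i) ^ 2)"
      unfolding e1 e2 e3 using p1 p2 r_term[of "real P - real K - real i" "real P - real i" "real K"]
      by (simp add: algebra_simps)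
  qed simp
  also have "\<dots> = q_rkg K P ^ 2 * (\<Prod>i<K. 1 - real K ^ 2 / (real P - real K - real i) ^ 2)"
    unfolding q by (simp add: prod.distrib prod_power_distrib)
  finally show ?thesis .
qed

lemma per_n:
  assumes K1: "1 \<le> K" and KP: "4 * K \<le> P"
  defines "u \<equiv> real K ^ 2 / real P" and "w \<equiv> real K / real P"
    and "q \<equiv> q_rkg K P"
    and "B \<equiv> 1 - (\<Prod>i<K. 1 - real K ^ 2 / (real P - real K - real i) ^ 2)"
  shows "1 - u / 2 \<le> (1 - q) / u" "(1 - q) / u \<le> 1 / (1 - w)"
    "1 - u * w / 2 \<le> B / (u * w)" "B / (u * w) \<le> 1 / (1 - 2 * w) ^ 2"
    "1 - u / (1 - w) \<le> q" "q \<le> 1"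
    "\<bar>beta_rkg K P / tau_rkg K P - 1\<bar> \<le> \<bar>((1 - q) / u) ^ 3 - 1\<bar> + \<bar>q ^ 3 * (B / (u * w)) - 1\<bar>"
proof -
  define k where "k = real K"
  define p where "p = real P"
  have k1: "k \<ge> 1" using K1 by (simp add: k_def)
  have kp: "4 * k \<le> p" using KP by (simp add: k_def p_def)
  have p0: "p > 0" using k1 kp by simp
  have u_def': "u = k^2 / p" and w_def': "w = k / p" by (simp_all add: u_def w_def k_def p_def)
  have u0: "u > 0" and w0: "w > 0" using p0 k1 by (simp_all add: u_def' w_def')
  have w1: "1 - w > 0" "1 - 2 * w > 0" using p0 k1 kp by (simp_all add: w_def' field_simps)
  have qp: "q = (\<Prod>i<K. 1 - k / (p - real i))"
    using K1 KP by (simp add: q_def q_prod k_def p_def)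
  have yb: "\<And>i. i < K \<Longrightarrow> k / p \<le> k / (p - real i) \<and> k / (p - real i) \<le> k / (p - k)"
  proof -
    fix i assume "i < K"
    then have "real i < k" "real i \<ge> 0" by (simp_all add: k_def)
    then show "k / p \<le> k / (p - real i) \<and> k / (p - real i) \<le> k / (p - k)"
      using k1 kp by (intro conjI divide_left_mono) auto
  qed
  have d1: "k / (p - k) \<le> 1" using k1 kp by simp
  have c0: "0 \<le> k / p" using k1 p0 by simp
  have Kc: "real K * (k / p) = u" by (simp add: u_def' k_def power2_eq_square)
  have Kd: "real K * (k / (p - k)) = u / (1 - w)"
    using p0 kp k1 by (simp add: u_def' w_def' k_def field_simps power2_eq_square)
  have qlo: "u - u^2/2 \<le> 1 - q"
    using prod_bounds(1)[of K "k/p" "\<lambda>i. k / (p - real i)" "k/(p-k)", OF yb c0 d1] unfolding qp Kc .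
  have qhi: "1 - q \<le> u / (1 - w)"
    using prod_bounds(2)[of K "k/p" "\<lambda>i. k / (p - real i)" "k/(p-k)", OF yb c0 d1] unfolding qp Kd .
  show "1 - u / (1 - w) \<le> q" using qhi by simp
  show "q \<le> 1" unfolding qp
    using yb k1 kp by (intro prod_le_1) (auto simp: k_def)
  have "1 - u / 2 = (u - u^2/2) / u" using u0 by (simp add: field_simps power2_eq_square)
  also have "\<dots> \<le> (1 - q) / u" using qlo u0 by (intro divide_right_mono) auto
  finally show "1 - u / 2 \<le> (1 - q) / u" .
  have "(1 - q) / u \<le> (u / (1 - w)) / u" using qhi u0 by (intro divide_right_mono) auto
  also have "\<dots> = 1 / (1 - w)" using u0 w1 by simp
  finally show "(1 - q) / u \<le> 1 / (1 - w)" .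
  have zb: "\<And>i. i < K \<Longrightarrow> k^2 / p^2 \<le> k^2 / (p - k - real i)^2 \<and> k^2 / (p - k - real i)^2 \<le> k^2 / (p - 2 * k)^2"
  proof -
    fix i assume "i < K"
    then have "real i < k" "real i \<ge> 0" by (simp_all add: k_def)
    then show "k^2 / p^2 \<le> k^2 / (p - k - real i)^2 \<and> k^2 / (p - k - real i)^2 \<le> k^2 / (p - 2 * k)^2"
      using k1 kp by (intro conjI divide_left_mono power_mono mult_pos_pos) auto
  qed
  have d1': "k^2 / (p - 2 * k)^2 \<le> 1"
  proof -
    have "k^2 \<le> (p - 2 * k)^2" using k1 kp by (intro power_mono) auto
    then show ?thesis using k1 kp by simp
  qed
  have c0': "0 \<le> k^2 / p^2" by simp
  have Kc': "real K * (k^2 / p^2) = u * w" by (simp add: u_def' w_def' k_def power2_eq_square)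
  have Kd': "real K * (k^2 / (p - 2 * k)^2) = u * w / (1 - 2 * w)^2"
    using p0 kp k1 by (simp add: u_def' w_def' k_def field_simps power2_eq_square)
  have Bp: "B = 1 - (\<Prod>i<K. 1 - k^2 / (p - k - real i)^2)" by (simp add: B_def k_def p_def)
  have Blo: "u * w - (u * w)^2/2 \<le> B"
    using prod_bounds(1)[of K "k^2/p^2" "\<lambda>i. k^2 / (p - k - real i)^2" "k^2/(p - 2 * k)^2", OF zb c0' d1'] unfolding Bp Kc' .
  have Bhi: "B \<le> u * w / (1 - 2 * w)^2"
    using prod_bounds(2)[of K "k^2/p^2" "\<lambda>i. k^2 / (p - k - real i)^2" "k^2/(p - 2 * k)^2", OF zb c0' d1'] unfolding Bp Kd' .
  have uw0: "u * w > 0" using u0 w0 by simp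
  have "1 - u * w / 2 = (u * w - (u * w)^2/2) / (u * w)" using u0 w0 by (simp add: field_simps power2_eq_square)
  also have "\<dots> \<le> B / (u * w)" using Blo uw0 by (intro divide_right_mono) auto
  finally show "1 - u * w / 2 \<le> B / (u * w)" .
  have "B / (u * w) \<le> (u * w / (1 - 2 * w)^2) / (u * w)" using Bhi uw0 by (intro divide_right_mono) auto
  also have "\<dots> = 1 / (1 - 2 * w)^2" using u0 w0 w1 by simp
  finally show "B / (u * w) \<le> 1 / (1 - 2 * w) ^ 2" .
  have r: "r_rkg K P = q^2 * (1 - B)"
    using r_prod[of K P] K1 KP by (simp add: q_def B_def)
  have beta: "beta_rkg K P = u^3 * ((1 - q) / u)^3 + (u * w) * (q^3 * (B / (u * w)))"
  proof -
    have e1: "u^3 * ((1 - q) / u)^3 = (1 - q)^3" using u0 by (simp add: power_divide)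
    have e2: "(u * w) * (q^3 * (B / (u * w))) = q^3 * B" using u0 w0 by simp
    have "beta_rkg K P = (1 - q)^3 + q^3 * B"
      by (simp add: beta_rkg_def r q_def[symmetric] algebra_simps power3_eq_cube power2_eq_square)
    then show ?thesis unfolding e1 e2 .
  qed
  have tau: "tau_rkg K P = u * w + u^3"
    by (simp add: tau_rkg_def u_def' w_def' k_def p_def field_simps power2_eq_square power3_eq_cube)
  show "\<bar>beta_rkg K P / tau_rkg K P - 1\<bar> \<le> \<bar>((1 - q) / u) ^ 3 - 1\<bar> + \<bar>q ^ 3 * (B / (u * w)) - 1\<bar>"
    unfolding beta tau by (rule ratio_bound[OF u0 uw0])
qed

theorem proposition3:
  fixes K P :: "nat \<Rightarrow> nat"
  assumes scaling: "\<And>n. 1 \<le> K n \<and> K n \<le> P n"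
    and lim: "(\<lambda>n. real (K n) ^ 2 / real (P n)) \<longlonglongrightarrow> 0"
  shows "(\<lambda>n. beta_rkg (K n) (P n) / tau_rkg (K n) (P n)) \<longlonglongrightarrow> 1"
proof -
  define u where "u n = real (K n) ^ 2 / real (P n)" for n
  define w where "w n = real (K n) / real (P n)" for n
  define q where "q n = q_rkg (K n) (P n)" for n
  define B where "B n = 1 - (\<Prod>i<K n. 1 - real (K n) ^ 2 / (real (P n) - real (K n) - real i) ^ 2)" for n
  have u: "u \<longlonglongrightarrow> 0" using lim by (simp add: u_def[abs_def])
  have wu: "0 \<le> w n \<and> w n \<le> u n" for n
  proof -
    have "real (K n) \<le> real (K n) ^ 2" using scaling[of n] by (simp add: power2_eq_square)
    then show ?thesis unfolding u_def w_def by (simp add: divide_right_mono)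
  qed
  have w: "w \<longlonglongrightarrow> 0"
    by (rule tendsto_sandwich[of "\<lambda>_. 0" _ _ u]) (use wu u in auto)
  have ev: "eventually (\<lambda>n. 4 * K n \<le> P n) sequentially"
  proof -
    have "eventually (\<lambda>n. u n < 1/4) sequentially" using order_tendstoD(2)[OF u, of "1/4"] by simp
    then show ?thesis
    proof (rule eventually_mono)
      fix n assume h: "u n < 1/4"
      have P0: "real (P n) > 0" using scaling[of n] by simp
      have "4 * real (K n) ^ 2 < real (P n)" using h P0 by (simp add: u_def field_simps)
      moreover have "real (K n) \<le> real (K n) ^ 2" using scaling[of n] by (simp only: power2_eq_square of_nat_mult[symmetric] of_nat_le_iff) simp
      ultimately have "4 * real (K n) < real (P n)" by linarith
      then show "4 * K n \<le> P n" by linarith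
    qed
  qed
  note pn = per_n[of "K n" "P n" for n]
  have a: "(\<lambda>n. (1 - q n) / u n) \<longlonglongrightarrow> 1"
  proof (rule tendsto_sandwich[of "\<lambda>n. 1 - u n / 2" _ _ "\<lambda>n. 1 / (1 - w n)"])
    show "eventually (\<lambda>n. 1 - u n / 2 \<le> (1 - q n) / u n) sequentially"
      using ev by eventually_elim (use scaling pn(1) in \<open>auto simp: u_def q_def\<close>)
    show "eventually (\<lambda>n. (1 - q n) / u n \<le> 1 / (1 - w n)) sequentially"
      using ev by eventually_elim (use scaling pn(2) in \<open>auto simp: u_def w_def q_def\<close>)
    show "(\<lambda>n. 1 - u n / 2) \<longlonglongrightarrow> 1" using u by (auto intro!: tendsto_eq_intros)
    show "(\<lambda>n. 1 / (1 - w n)) \<longlonglongrightarrow> 1" using w by (auto intro!: tendsto_eq_intros)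
  qed
  have b: "(\<lambda>n. B n / (u n * w n)) \<longlonglongrightarrow> 1"
  proof (rule tendsto_sandwich[of "\<lambda>n. 1 - u n * w n / 2" _ _ "\<lambda>n. 1 / (1 - 2 * w n) ^ 2"])
    show "eventually (\<lambda>n. 1 - u n * w n / 2 \<le> B n / (u n * w n)) sequentially"
      using ev by eventually_elim (use scaling pn(3) in \<open>auto simp: u_def w_def B_def\<close>)
    show "eventually (\<lambda>n. B n / (u n * w n) \<le> 1 / (1 - 2 * w n) ^ 2) sequentially"
      using ev by eventually_elim (use scaling pn(4) in \<open>auto simp: u_def w_def B_def\<close>)
    show "(\<lambda>n. 1 - u n * w n / 2) \<longlonglongrightarrow> 1" using u w by (auto intro!: tendsto_eq_intros)
    show "(\<lambda>n. 1 / (1 - 2 * w n) ^ 2) \<longlonglongrightarrow> 1" using w by (auto intro!: tendsto_eq_intros)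
  qed
  have qt: "q \<longlonglongrightarrow> 1"
  proof (rule tendsto_sandwich[of "\<lambda>n. 1 - u n / (1 - w n)" _ _ "\<lambda>_. 1"])
    show "eventually (\<lambda>n. 1 - u n / (1 - w n) \<le> q n) sequentially"
      using ev by eventually_elim (use scaling pn(5) in \<open>auto simp: u_def w_def q_def\<close>)
    show "eventually (\<lambda>n. q n \<le> 1) sequentially"
      using ev by eventually_elim (use scaling pn(6) in \<open>auto simp: q_def\<close>)
    show "(\<lambda>n. 1 - u n / (1 - w n)) \<longlonglongrightarrow> 1" using u w by (auto intro!: tendsto_eq_intros)
  qed simp
  define g where "g n = \<bar>((1 - q n) / u n) ^ 3 - 1\<bar> + \<bar>q n ^ 3 * (B n / (u n * w n)) - 1\<bar>" for n
  have g: "g \<longlonglongrightarrow> 0"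
  proof -
    define A where "A n = (1 - q n) / u n" for n
    define Bb where "Bb n = B n / (u n * w n)" for n
    have A: "A \<longlonglongrightarrow> 1" using a by (simp add: A_def[abs_def])
    have Bb: "Bb \<longlonglongrightarrow> 1" using b by (simp add: Bb_def[abs_def])
    have "(\<lambda>n. \<bar>A n ^ 3 - 1\<bar> + \<bar>q n ^ 3 * Bb n - 1\<bar>) \<longlonglongrightarrow> \<bar>1 ^ 3 - 1\<bar> + \<bar>1 ^ 3 * 1 - 1\<bar>"
      by (intro tendsto_intros A Bb qt)
    then show ?thesis by (simp add: g_def[abs_def] A_def Bb_def)
  qed
  have "(\<lambda>n. beta_rkg (K n) (P n) / tau_rkg (K n) (P n) - 1) \<longlonglongrightarrow> 0"
  proof (rule Lim_null_comparison[OF _ g])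
    show "eventually (\<lambda>n. norm (beta_rkg (K n) (P n) / tau_rkg (K n) (P n) - 1) \<le> g n) sequentially"
      using ev by eventually_elim (use scaling pn(7) in \<open>auto simp: u_def w_def q_def B_def g_def\<close>)
  qed
  then have "(\<lambda>n. (beta_rkg (K n) (P n) / tau_rkg (K n) (P n) - 1) + 1) \<longlonglongrightarrow> 0 + 1"
    by (intro tendsto_add) auto
  then show ?thesis by simp
qed

end
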